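(* Let $X,Y$ be random variables on a probability space $(\Omega,\mathcal F,\mathbb P)$ such that $X$, $Y$ and $XY$ are integrable. Then: (i) If $X$ and $Y$ are independent, then $\{\mathbb P_A\times\mathbb P_B: A,B\in\sigma^+(X)\}\subseteq\mathcal P_{X,Y}$ and $\{\mathbb P_A\times\mathbb P_B: A,B\in\sigma^+(Y)\}\subseteq\mathcal P_{X,Y}$. (ii) If $\{\mathbb P_A\times\mathbb P_B: A,B\in\sigma^+(X)\}\subseteq\mathcal P_{X,Y}$, then for all $A,B\in\sigma^+(X)$, $\mathbb E[XY\mid A]+\mathbb E[XY\mid B]-\mathbb E[X\mid A]\mathbb E[Y\mid B]-\mathbb E[Y\mid A]\mathbb E[X\mid B]\ge0$; in particular (taking $A=B$) $\mathbb E[XY\mid A]\ge \mathbb E[X\mid A]\mathbb E[Y\mid A]$ for every $A\in\sigma^+(X)$.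
   Context: $\sigma^+(Z)=\{A\in\sigma(Z):\mathbb P(A)>0\}$, where $\sigma(Z)$ is the $\sigma$-field generated by $Z$; $\mathbb P_A=\mathbb P(\cdot\mid A)$ and $\mathbb E[\cdot\mid A]$ is expectation under $\mathbb P_A$. $\mathcal P_{X,Y}$ is the set of all product probability measures $\pi_1\times\pi_2$ on $(\Omega^2,\mathcal F\otimes\mathcal F)$ such that $\iint_{\Omega^2}(X(\omega)-X(\omega'))(Y(\omega)-Y(\omega'))\,\pi_1(\mathrm d\omega)\pi_2(\mathrm d\omega')\ge0$. *)

theory Defs
  imports "HOL-Probability.Probability"
begin

definition sigma_plus :: "'a measure \<Rightarrow> ('a \<Rightarrow> real) \<Rightarrow> 'a set set" where
  "sigma_plus M Z = {A \<in> sets (vimage_algebra (space M) Z borel). measure M A > 0}"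

definition cond_prob :: "'a measure \<Rightarrow> 'a set \<Rightarrow> 'a measure" where
  "cond_prob M A = uniform_measure M A"

definition cond_expect_on :: "'a measure \<Rightarrow> 'a set \<Rightarrow> ('a \<Rightarrow> real) \<Rightarrow> real" where
  "cond_expect_on M A f = (\<integral>\<omega>. f \<omega> \<partial>(cond_prob M A))"

definition PXY :: "'a measure \<Rightarrow> ('a \<Rightarrow> real) \<Rightarrow> ('a \<Rightarrow> real) \<Rightarrow> ('a \<times> 'a) measure set" where
  "PXY M X Y = {p1 \<Otimes>\<^sub>M p2 | p1 p2.
      prob_space p1 \<and> prob_space p2 \<and> sets p1 = sets M \<and> sets p2 = sets M \<and>
      integrable (p1 \<Otimes>\<^sub>M p2) (\<lambda>z. (X (fst z) - X (snd z)) * (Y (fst z) - Y (snd z))) \<and>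
      (\<integral>z. (X (fst z) - X (snd z)) * (Y (fst z) - Y (snd z)) \<partial>(p1 \<Otimes>\<^sub>M p2)) \<ge> 0}"

end

theory Submission
  imports Defs
begin

lemma prod_int:
  fixes f g :: "'a \<Rightarrow> real"
  assumes "sigma_finite_measure M1" "sigma_finite_measure M2"
    and f: "integrable M1 f" and g: "integrable M2 g"
  shows "integrable (M1 \<Otimes>\<^sub>M M2) (\<lambda>z. f (fst z) * g (snd z))"
    and "(\<integral>z. f (fst z) * g (snd z) \<partial>(M1 \<Otimes>\<^sub>M M2)) = integral\<^sup>L M1 f * integral\<^sup>L M2 g"
proof -
  interpret M1: sigma_finite_measure M1 by fact
  interpret M2: sigma_finite_measure M2 by fact
  interpret P: pair_sigma_finite M1 M2 ..
  have [measurable]: "f \<in> borel_measurable M1" "g \<in> borel_measurable M2" using f g by auto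
  have "(\<integral>\<^sup>+ z. ennreal (norm (f (fst z) * g (snd z))) \<partial>(M1 \<Otimes>\<^sub>M M2))
      = (\<integral>\<^sup>+x. (\<integral>\<^sup>+y. ennreal (norm (f x)) * ennreal (norm (g y)) \<partial>M2) \<partial>M1)"
    by (subst M2.nn_integral_fst[symmetric]) (auto simp: abs_mult ennreal_mult)
  also have "\<dots> = (\<integral>\<^sup>+x. ennreal (norm (f x)) * (\<integral>\<^sup>+y. ennreal (norm (g y)) \<partial>M2) \<partial>M1)"
    by (intro nn_integral_cong nn_integral_cmult) auto
  also have "\<dots> = (\<integral>\<^sup>+y. ennreal (norm (g y)) \<partial>M2) * (\<integral>\<^sup>+x. ennreal (norm (f x)) \<partial>M1)"
    by (subst mult.commute) (rule nn_integral_multc, auto)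
  also have "\<dots> < \<infinity>"
    using f g unfolding integrable_iff_bounded by (simp add: ennreal_mult_less_top)
  finally show int: "integrable (M1 \<Otimes>\<^sub>M M2) (\<lambda>z. f (fst z) * g (snd z))"
    unfolding integrable_iff_bounded by auto
  have "(\<integral>z. f (fst z) * g (snd z) \<partial>(M1 \<Otimes>\<^sub>M M2)) = (\<integral>x. (\<integral>y. f x * g y \<partial>M2) \<partial>M1)"
    using P.integral_fst'[OF int] by simp
  also have "\<dots> = integral\<^sup>L M1 f * integral\<^sup>L M2 g" by simp
  finally show "(\<integral>z. f (fst z) * g (snd z) \<partial>(M1 \<Otimes>\<^sub>M M2)) = integral\<^sup>L M1 f * integral\<^sup>L M2 g" .
qed

lemma unif_density:
  assumes "prob_space M" "A \<in> sets M" "measure M A > 0"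
  shows "uniform_measure M A = density M (\<lambda>x. ennreal (indicator A x / measure M A))"
proof -
  interpret prob_space M by fact
  have "emeasure M A = ennreal (measure M A)" by (simp add: emeasure_eq_measure)
  moreover have "(\<lambda>x. indicator A x / ennreal (measure M A)) = (\<lambda>x. ennreal (indicator A x / measure M A))"
  proof
    fix x show "indicator A x / ennreal (measure M A) = ennreal (indicator A x / measure M A)"
      using divide_ennreal[of 1 "measure M A"] assms(3) by (auto split: split_indicator)
  qed
  ultimately show ?thesis unfolding uniform_measure_def by simp
qed

lemma unif_int:
  fixes f :: "'a \<Rightarrow> real"
  assumes "prob_space M" "A \<in> sets M" "measure M A > 0" "integrable M f"
  shows "integrable (cond_prob M A) f"
    and "cond_expect_on M A f = (\<integral>x. indicator A x * f x \<partial>M) / measure M A"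
proof -
  have [measurable]: "f \<in> borel_measurable M" "A \<in> sets M" using assms by auto
  have i: "integrable M (\<lambda>x. indicator A x * f x)"
    using integrable_mult_indicator[OF assms(2) assms(4)] by simp
  show "integrable (cond_prob M A) f"
    unfolding cond_prob_def unif_density[OF assms(1-3)]
    using i by (subst integrable_density) (auto intro: integrable_divide simp: divide_simps)
  have "cond_expect_on M A f = (\<integral>x. (indicator A x * f x) / measure M A \<partial>M)"
    unfolding cond_expect_on_def cond_prob_def unif_density[OF assms(1-3)]
    by (subst integral_density) (auto intro!: integral_cong)
  also have "\<dots> = (\<integral>x. indicator A x * f x \<partial>M) / measure M A" by simp
  finally show "cond_expect_on M A f = (\<integral>x. indicator A x * f x \<partial>M) / measure M A" .
qed

lemma key:
  fixes X Y :: "'a \<Rightarrow> real"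
  assumes M: "prob_space M" and A: "A \<in> sets M" "measure M A > 0" and B: "B \<in> sets M" "measure M B > 0"
    and iX: "integrable M X" and iY: "integrable M Y" and iXY: "integrable M (\<lambda>\<omega>. X \<omega> * Y \<omega>)"
  shows "prob_space (cond_prob M A)" "sets (cond_prob M A) = sets M"
    and "integrable (cond_prob M A \<Otimes>\<^sub>M cond_prob M B) (\<lambda>z. (X (fst z) - X (snd z)) * (Y (fst z) - Y (snd z)))"
    and "(\<integral>z. (X (fst z) - X (snd z)) * (Y (fst z) - Y (snd z)) \<partial>(cond_prob M A \<Otimes>\<^sub>M cond_prob M B)) =
       cond_expect_on M A (\<lambda>\<omega>. X \<omega> * Y \<omega>) + cond_expect_on M B (\<lambda>\<omega>. X \<omega> * Y \<omega>)
               - cond_expect_on M A X * cond_expect_on M B Y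
               - cond_expect_on M A Y * cond_expect_on M B X"
proof -
  interpret prob_space M by fact
  have pA: "prob_space (cond_prob M A)" and pB: "prob_space (cond_prob M B)"
    unfolding cond_prob_def using A B
    by (auto intro!: prob_space_uniform_measure simp: emeasure_eq_measure)
  then show "prob_space (cond_prob M A)" by simp
  show "sets (cond_prob M A) = sets M" unfolding cond_prob_def by simp
  interpret PA: prob_space "cond_prob M A" by fact
  interpret PB: prob_space "cond_prob M B" by fact
  have sA: "sigma_finite_measure (cond_prob M A)" "sigma_finite_measure (cond_prob M B)"
    by unfold_locales
  have iA: "integrable (cond_prob M A) X" "integrable (cond_prob M A) Y" "integrable (cond_prob M A) (\<lambda>\<omega>. X \<omega> * Y \<omega>)"
    "integrable (cond_prob M A) (\<lambda>_. 1::real)"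
    using unif_int(1)[OF M A iX] unif_int(1)[OF M A iY] unif_int(1)[OF M A iXY] by auto
  have iB: "integrable (cond_prob M B) X" "integrable (cond_prob M B) Y" "integrable (cond_prob M B) (\<lambda>\<omega>. X \<omega> * Y \<omega>)"
    "integrable (cond_prob M B) (\<lambda>_. 1::real)"
    using unif_int(1)[OF M B iX] unif_int(1)[OF M B iY] unif_int(1)[OF M B iXY] by auto
  note P1 = prod_int[OF sA iA(3) iB(4)]
  note P2 = prod_int[OF sA iA(4) iB(3)]
  note P3 = prod_int[OF sA iA(1) iB(2)]
  note P4 = prod_int[OF sA iA(2) iB(1)]
  have eq: "(\<lambda>z. (X (fst z) - X (snd z)) * (Y (fst z) - Y (snd z))) =
    (\<lambda>z. ((X (fst z) * Y (fst z)) * 1 + 1 * (X (snd z) * Y (snd z))) - X (fst z) * Y (snd z) - Y (fst z) * X (snd z))"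
    by (auto simp: algebra_simps)
  show "integrable (cond_prob M A \<Otimes>\<^sub>M cond_prob M B) (\<lambda>z. (X (fst z) - X (snd z)) * (Y (fst z) - Y (snd z)))"
    unfolding eq using P1(1) P2(1) P3(1) P4(1) by auto
  show "(\<integral>z. (X (fst z) - X (snd z)) * (Y (fst z) - Y (snd z)) \<partial>(cond_prob M A \<Otimes>\<^sub>M cond_prob M B)) =
       cond_expect_on M A (\<lambda>\<omega>. X \<omega> * Y \<omega>) + cond_expect_on M B (\<lambda>\<omega>. X \<omega> * Y \<omega>)
               - cond_expect_on M A X * cond_expect_on M B Y
               - cond_expect_on M A Y * cond_expect_on M B X"
    unfolding eq cond_expect_on_def
    using P1 P2 P3 P4 by (simp add: PA.prob_space PB.prob_space)
qed

lemma indep_fac: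
  fixes U V :: "'a \<Rightarrow> real" and g k :: "real \<Rightarrow> real"
  assumes M: "prob_space M" and ind: "prob_space.indep_var M borel U borel V"
    and g: "g \<in> borel_measurable borel" and k: "k \<in> borel_measurable borel"
    and ig: "integrable M (\<lambda>x. g (U x))" and ik: "integrable M (\<lambda>x. k (V x))"
  shows "(\<integral>x. g (U x) * k (V x) \<partial>M) = (\<integral>x. g (U x) \<partial>M) * (\<integral>x. k (V x) \<partial>M)"
proof -
  interpret prob_space M by fact
  have "indep_var borel (g \<circ> U) borel (k \<circ> V)" by (rule indep_var_compose[OF ind g k])
  then show ?thesis using indep_var_lebesgue_integral[of "g \<circ> U" "k \<circ> V"] ig ik
    by (simp add: comp_def)
qed

lemma vimage_sets:
  fixes Z :: "'a \<Rightarrow> real"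
  assumes "A \<in> sets (vimage_algebra (space M) Z borel)"
  obtains S where "S \<in> sets borel" "A = Z -` S \<inter> space M"
  using assms by (subst (asm) sets_vimage_algebra2) auto

lemma condX:
  fixes X Y :: "'a \<Rightarrow> real"
  assumes M: "prob_space M" and ind: "prob_space.indep_var M borel X borel Y"
    and mX: "X \<in> borel_measurable M" and mY: "Y \<in> borel_measurable M"
    and iX: "integrable M X" and iY: "integrable M Y" and iXY: "integrable M (\<lambda>\<omega>. X \<omega> * Y \<omega>)"
    and A: "A \<in> sigma_plus M X"
  shows "cond_expect_on M A (\<lambda>\<omega>. X \<omega> * Y \<omega>) = cond_expect_on M A X * integral\<^sup>L M Y"
    and "cond_expect_on M A Y = integral\<^sup>L M Y"
proof -
  interpret prob_space M by fact
  obtain S where S: "S \<in> sets borel" "A = X -` S \<inter> space M" and pos: "measure M A > 0"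
    using A unfolding sigma_plus_def by (auto elim: vimage_sets)
  have [measurable]: "S \<in> sets borel" by fact
  have As: "A \<in> sets M" using S mX by (auto intro: measurable_sets)
  have indA: "\<And>x. x \<in> space M \<Longrightarrow> indicator A x = (indicator S (X x) :: real)"
    using S by (auto split: split_indicator)
  have i1: "integrable M (\<lambda>x. indicator S (X x) * X x)"
    using integrable_mult_indicator[OF As iX]
    by (intro Bochner_Integration.integrable_cong[THEN iffD1, OF refl _ integrable_mult_indicator[OF As iX]]) (auto simp: indA)
  have i2: "integrable M (\<lambda>x. indicator S (X x) :: real)"
    by (intro Bochner_Integration.integrable_cong[THEN iffD1, OF refl _ integrable_real_indicator[OF As]])
      (auto simp: indA less_top[symmetric])
  have m1: "(\<lambda>t::real. indicator S t * t) \<in> borel_measurable borel" by measurable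
  have m2: "(\<lambda>t::real. indicator S t :: real) \<in> borel_measurable borel" by measurable
  have m3: "(\<lambda>t::real. t) \<in> borel_measurable borel" by measurable
  have iY': "integrable M (\<lambda>x. Y x)" using iY by simp
  note f1 = indep_fac[OF M ind m1 m3 i1 iY']
  note f2 = indep_fac[OF M ind m2 m3 i2 iY']
  have e1: "(\<integral>x. indicator A x * (X x * Y x) \<partial>M) = (\<integral>x. indicator A x * X x \<partial>M) * integral\<^sup>L M Y"
  proof -
    have "(\<integral>x. indicator A x * (X x * Y x) \<partial>M) = (\<integral>x. (indicator S (X x) * X x) * Y x \<partial>M)"
      by (rule Bochner_Integration.integral_cong[OF refl]) (simp add: indA)
    also have "\<dots> = (\<integral>x. indicator S (X x) * X x \<partial>M) * integral\<^sup>L M Y"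
      by (rule f1)
    also have "(\<integral>x. indicator S (X x) * X x \<partial>M) = (\<integral>x. indicator A x * X x \<partial>M)"
      by (rule Bochner_Integration.integral_cong[OF refl]) (simp add: indA)
    finally show ?thesis .
  qed
  have e2: "(\<integral>x. indicator A x * Y x \<partial>M) = measure M A * integral\<^sup>L M Y"
  proof -
    have "(\<integral>x. indicator A x * Y x \<partial>M) = (\<integral>x. indicator S (X x) * Y x \<partial>M)"
      by (rule Bochner_Integration.integral_cong[OF refl]) (simp add: indA)
    also have "\<dots> = (\<integral>x. indicator S (X x) \<partial>M) * integral\<^sup>L M Y"
      by (rule f2)
    also have "(\<integral>x. (indicator S (X x) :: real) \<partial>M) = (\<integral>x. indicator A x \<partial>M)"
      by (rule Bochner_Integration.integral_cong[OF refl]) (simp add: indA)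
    also have "\<dots> = measure M A" using As by simp
    finally show ?thesis .
  qed
  show "cond_expect_on M A (\<lambda>\<omega>. X \<omega> * Y \<omega>) = cond_expect_on M A X * integral\<^sup>L M Y"
    unfolding unif_int(2)[OF M As pos iXY] unif_int(2)[OF M As pos iX] e1 by simp
  show "cond_expect_on M A Y = integral\<^sup>L M Y"
    unfolding unif_int(2)[OF M As pos iY] e2 using pos by simp
qed

lemma condY:
  fixes X Y :: "'a \<Rightarrow> real"
  assumes M: "prob_space M" and ind: "prob_space.indep_var M borel X borel Y"
    and mX: "X \<in> borel_measurable M" and mY: "Y \<in> borel_measurable M"
    and iX: "integrable M X" and iY: "integrable M Y" and iXY: "integrable M (\<lambda>\<omega>. X \<omega> * Y \<omega>)"
    and A: "A \<in> sigma_plus M Y"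
  shows "cond_expect_on M A (\<lambda>\<omega>. X \<omega> * Y \<omega>) = integral\<^sup>L M X * cond_expect_on M A Y"
    and "cond_expect_on M A X = integral\<^sup>L M X"
proof -
  interpret prob_space M by fact
  obtain S where S: "S \<in> sets borel" "A = Y -` S \<inter> space M" and pos: "measure M A > 0"
    using A unfolding sigma_plus_def by (auto elim: vimage_sets)
  have [measurable]: "S \<in> sets borel" by fact
  have As: "A \<in> sets M" using S mY by (auto intro: measurable_sets)
  have indA: "\<And>x. x \<in> space M \<Longrightarrow> indicator A x = (indicator S (Y x) :: real)"
    using S by (auto split: split_indicator)
  have i1: "integrable M (\<lambda>x. indicator S (Y x) * Y x)"
    by (intro Bochner_Integration.integrable_cong[THEN iffD1, OF refl _ integrable_mult_indicator[OF As iY]]) (auto simp: indA)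
  have i2: "integrable M (\<lambda>x. indicator S (Y x) :: real)"
    by (intro Bochner_Integration.integrable_cong[THEN iffD1, OF refl _ integrable_real_indicator[OF As]])
      (auto simp: indA less_top[symmetric])
  have m1: "(\<lambda>t::real. indicator S t * t) \<in> borel_measurable borel" by measurable
  have m2: "(\<lambda>t::real. indicator S t :: real) \<in> borel_measurable borel" by measurable
  have m3: "(\<lambda>t::real. t) \<in> borel_measurable borel" by measurable
  have iX': "integrable M (\<lambda>x. X x)" using iX by simp
  note f1 = indep_fac[OF M ind m3 m1 iX' i1]
  note f2 = indep_fac[OF M ind m3 m2 iX' i2]
  have e1: "(\<integral>x. indicator A x * (X x * Y x) \<partial>M) = integral\<^sup>L M X * (\<integral>x. indicator A x * Y x \<partial>M)"
  proof -
    have "(\<integral>x. indicator A x * (X x * Y x) \<partial>M) = (\<integral>x. X x * (indicator S (Y x) * Y x) \<partial>M)"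
      by (rule Bochner_Integration.integral_cong[OF refl]) (simp add: indA)
    also have "\<dots> = integral\<^sup>L M X * (\<integral>x. indicator S (Y x) * Y x \<partial>M)"
      by (rule f1)
    also have "(\<integral>x. indicator S (Y x) * Y x \<partial>M) = (\<integral>x. indicator A x * Y x \<partial>M)"
      by (rule Bochner_Integration.integral_cong[OF refl]) (simp add: indA)
    finally show ?thesis .
  qed
  have e2: "(\<integral>x. indicator A x * X x \<partial>M) = integral\<^sup>L M X * measure M A"
  proof -
    have "(\<integral>x. indicator A x * X x \<partial>M) = (\<integral>x. X x * indicator S (Y x) \<partial>M)"
      by (rule Bochner_Integration.integral_cong[OF refl]) (simp add: indA)
    also have "\<dots> = integral\<^sup>L M X * (\<integral>x. (indicator S (Y x) :: real) \<partial>M)"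
      by (rule f2)
    also have "(\<integral>x. (indicator S (Y x) :: real) \<partial>M) = (\<integral>x. indicator A x \<partial>M)"
      by (rule Bochner_Integration.integral_cong[OF refl]) (simp add: indA)
    also have "\<dots> = measure M A" using As by simp
    finally show ?thesis .
  qed
  show "cond_expect_on M A (\<lambda>\<omega>. X \<omega> * Y \<omega>) = integral\<^sup>L M X * cond_expect_on M A Y"
    unfolding unif_int(2)[OF M As pos iXY] unif_int(2)[OF M As pos iY] e1 by simp
  show "cond_expect_on M A X = integral\<^sup>L M X"
    unfolding unif_int(2)[OF M As pos iX] e2 using pos by simp
qed

lemma splus_sets:
  assumes "Z \<in> borel_measurable M" "A \<in> sigma_plus M Z"
  shows "A \<in> sets M" "measure M A > 0"
proof -
  obtain S where S: "S \<in> sets borel" "A = Z -` S \<inter> space M"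
    using assms(2) unfolding sigma_plus_def by (auto elim: vimage_sets)
  then show "A \<in> sets M" using assms(1) by (auto intro: measurable_sets)
  show "measure M A > 0" using assms(2) unfolding sigma_plus_def by auto
qed

theorem proposition4p2:
  fixes M :: "'a measure" and X Y :: "'a \<Rightarrow> real"
  assumes "prob_space M"
    and "X \<in> borel_measurable M" and "Y \<in> borel_measurable M"
    and "integrable M X" and "integrable M Y" and "integrable M (\<lambda>\<omega>. X \<omega> * Y \<omega>)"
  shows "(prob_space.indep_var M borel X borel Y \<longrightarrow>
            {cond_prob M A \<Otimes>\<^sub>M cond_prob M B | A B. A \<in> sigma_plus M X \<and> B \<in> sigma_plus M X} \<subseteq> PXY M X Y \<and>
            {cond_prob M A \<Otimes>\<^sub>M cond_prob M B | A B. A \<in> sigma_plus M Y \<and> B \<in> sigma_plus M Y} \<subseteq> PXY M X Y)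
       \<and> ({cond_prob M A \<Otimes>\<^sub>M cond_prob M B | A B. A \<in> sigma_plus M X \<and> B \<in> sigma_plus M X} \<subseteq> PXY M X Y \<longrightarrow>
            (\<forall>A\<in>sigma_plus M X. \<forall>B\<in>sigma_plus M X.
               cond_expect_on M A (\<lambda>\<omega>. X \<omega> * Y \<omega>) + cond_expect_on M B (\<lambda>\<omega>. X \<omega> * Y \<omega>)
               - cond_expect_on M A X * cond_expect_on M B Y
               - cond_expect_on M A Y * cond_expect_on M B X \<ge> 0) \<and>
            (\<forall>A\<in>sigma_plus M X.
               cond_expect_on M A (\<lambda>\<omega>. X \<omega> * Y \<omega>) \<ge> cond_expect_on M A X * cond_expect_on M A Y))"
proof (intro conjI impI)
  note M = assms(1) and iX = assms(4) and iY = assms(5) and iXY = assms(6)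
  have mem: "cond_prob M A \<Otimes>\<^sub>M cond_prob M B \<in> PXY M X Y"
    if A: "A \<in> sets M" "measure M A > 0" and B: "B \<in> sets M" "measure M B > 0"
      and nn: "cond_expect_on M A (\<lambda>\<omega>. X \<omega> * Y \<omega>) + cond_expect_on M B (\<lambda>\<omega>. X \<omega> * Y \<omega>)
               - cond_expect_on M A X * cond_expect_on M B Y
               - cond_expect_on M A Y * cond_expect_on M B X \<ge> 0" for A B
    unfolding PXY_def
    apply (rule CollectI, rule exI[of _ "cond_prob M A"], rule exI[of _ "cond_prob M B"])
    using key[OF M A B iX iY iXY] key[OF M B A iX iY iXY] nn by simp
  assume ind: "prob_space.indep_var M borel X borel Y"
  show "{cond_prob M A \<Otimes>\<^sub>M cond_prob M B | A B. A \<in> sigma_plus M X \<and> B \<in> sigma_plus M X} \<subseteq> PXY M X Y"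
  proof safe
    fix A B assume A: "A \<in> sigma_plus M X" and B: "B \<in> sigma_plus M X"
    show "cond_prob M A \<Otimes>\<^sub>M cond_prob M B \<in> PXY M X Y"
      using mem[OF splus_sets[OF assms(2) A] splus_sets[OF assms(2) B]]
        condX[OF M ind assms(2-6) A] condX[OF M ind assms(2-6) B]
      by (simp add: algebra_simps)
  qed
next
  note M = assms(1) and iX = assms(4) and iY = assms(5) and iXY = assms(6)
  have mem: "cond_prob M A \<Otimes>\<^sub>M cond_prob M B \<in> PXY M X Y"
    if A: "A \<in> sets M" "measure M A > 0" and B: "B \<in> sets M" "measure M B > 0"
      and nn: "cond_expect_on M A (\<lambda>\<omega>. X \<omega> * Y \<omega>) + cond_expect_on M B (\<lambda>\<omega>. X \<omega> * Y \<omega>)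
               - cond_expect_on M A X * cond_expect_on M B Y
               - cond_expect_on M A Y * cond_expect_on M B X \<ge> 0" for A B
    unfolding PXY_def
    apply (rule CollectI, rule exI[of _ "cond_prob M A"], rule exI[of _ "cond_prob M B"])
    using key[OF M A B iX iY iXY] key[OF M B A iX iY iXY] nn by simp
  assume ind: "prob_space.indep_var M borel X borel Y"
  show "{cond_prob M A \<Otimes>\<^sub>M cond_prob M B | A B. A \<in> sigma_plus M Y \<and> B \<in> sigma_plus M Y} \<subseteq> PXY M X Y"
  proof safe
    fix A B assume A: "A \<in> sigma_plus M Y" and B: "B \<in> sigma_plus M Y"
    show "cond_prob M A \<Otimes>\<^sub>M cond_prob M B \<in> PXY M X Y"
      using mem[OF splus_sets[OF assms(3) A] splus_sets[OF assms(3) B]]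
        condY[OF M ind assms(2-6) A] condY[OF M ind assms(2-6) B]
      by (simp add: algebra_simps)
  qed
next
  note M = assms(1) and iX = assms(4) and iY = assms(5) and iXY = assms(6)
  assume sub: "{cond_prob M A \<Otimes>\<^sub>M cond_prob M B | A B. A \<in> sigma_plus M X \<and> B \<in> sigma_plus M X} \<subseteq> PXY M X Y"
  have gen: "cond_expect_on M A (\<lambda>\<omega>. X \<omega> * Y \<omega>) + cond_expect_on M B (\<lambda>\<omega>. X \<omega> * Y \<omega>)
               - cond_expect_on M A X * cond_expect_on M B Y
               - cond_expect_on M A Y * cond_expect_on M B X \<ge> 0"
    if A: "A \<in> sigma_plus M X" and B: "B \<in> sigma_plus M X" for A B
  proof -
    have "cond_prob M A \<Otimes>\<^sub>M cond_prob M B \<in> PXY M X Y" using sub A B by blast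
    then obtain p1 p2 where eq: "cond_prob M A \<Otimes>\<^sub>M cond_prob M B = p1 \<Otimes>\<^sub>M p2"
      and ge: "(\<integral>z. (X (fst z) - X (snd z)) * (Y (fst z) - Y (snd z)) \<partial>(p1 \<Otimes>\<^sub>M p2)) \<ge> 0"
      unfolding PXY_def by blast
    show ?thesis
      using ge unfolding eq[symmetric]
        key(4)[OF M splus_sets[OF assms(2) A] splus_sets[OF assms(2) B] iX iY iXY] by simp
  qed
  show "\<forall>A\<in>sigma_plus M X. \<forall>B\<in>sigma_plus M X.
               cond_expect_on M A (\<lambda>\<omega>. X \<omega> * Y \<omega>) + cond_expect_on M B (\<lambda>\<omega>. X \<omega> * Y \<omega>)
               - cond_expect_on M A X * cond_expect_on M B Y
               - cond_expect_on M A Y * cond_expect_on M B X \<ge> 0"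
    using gen by blast
  show "\<forall>A\<in>sigma_plus M X.
               cond_expect_on M A (\<lambda>\<omega>. X \<omega> * Y \<omega>) \<ge> cond_expect_on M A X * cond_expect_on M A Y"
  proof
    fix A assume A: "A \<in> sigma_plus M X"
    from gen[OF A A] show "cond_expect_on M A (\<lambda>\<omega>. X \<omega> * Y \<omega>) \<ge> cond_expect_on M A X * cond_expect_on M A Y"
      by (simp add: algebra_simps)
  qed
qed

end
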